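(* Let $M$ be a $3$-connected matroid, let $\mathcal{T}$ be a tangle of $M$, and let $C,D$ be disjoint subsets of $E(M)$ such that $C\cup D$ is independent in the tangle matroid $M(\mathcal{T})$ and $M/C\setminus D$ is $3$-connected. Then for each $d\in D$, either $M/C\setminus(D\setminus d)$ is $3$-connected or there is an element $c\in C$ such that $M/(C\setminus c)\setminus(D\setminus d)$ is $3$-connected.
   Context: $\lambda_M(X) = \rank_M(X) + \rank_M(E(M)\setminus X) - \rank(M)$. A tangle of order $\theta$ of $M$ is a collection $\mathcal{T}$ of subsets of $E(M)$ such that: (i) $\lambda_M(X)<\theta$ for all $X\in\mathcal{T}$; (ii) for every $X\subseteq E(M)$ with $\lambda_M(X)<\theta$, either $X\in\mathcal{T}$ or $E(M)\setminus X\in\mathcal{T}$; (iii) if $X,Y,Z\in\mathcal{T}$ then $X\cup Y\cup Z\neq E(M)$; (iv) $E(M)\setminus\{e\}\notin\mathcal{T}$ for every $e\in E(M)$. The tangle matroid $M(\mathcal{T})$ has rank function $\rank_{\mathcal{T}}(X) = \min\{\lambda_M(Y): X\subseteq Y\in\mathcal{T}\}$ if some member of $\mathcal{T}$ contains $X$, and $\theta$ otherwise. *)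

theory Defs
  imports Main
begin

definition matroid :: "'a set \<Rightarrow> ('a set \<Rightarrow> nat) \<Rightarrow> bool" where
  "matroid E r \<longleftrightarrow> finite E
     \<and> (\<forall>X. X \<subseteq> E \<longrightarrow> r X \<le> card X)
     \<and> (\<forall>X Y. X \<subseteq> Y \<and> Y \<subseteq> E \<longrightarrow> r X \<le> r Y)
     \<and> (\<forall>X Y. X \<subseteq> E \<and> Y \<subseteq> E \<longrightarrow> r (X \<union> Y) + r (X \<inter> Y) \<le> r X + r Y)"

definition conn_fn :: "'a set \<Rightarrow> ('a set \<Rightarrow> nat) \<Rightarrow> 'a set \<Rightarrow> nat" where
  "conn_fn E r X = r X + r (E - X) - r E"

text \<open>Rank function of the minor M / C \ D (on ground set E - C - D):
  X maps to r(X union C) - r(C).\<close>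
definition contr_rank :: "('a set \<Rightarrow> nat) \<Rightarrow> 'a set \<Rightarrow> 'a set \<Rightarrow> nat" where
  "contr_rank r C X = r (X \<union> C) - r C"

definition k_separation :: "'a set \<Rightarrow> ('a set \<Rightarrow> nat) \<Rightarrow> nat \<Rightarrow> 'a set \<Rightarrow> bool" where
  "k_separation E r k X \<longleftrightarrow> X \<subseteq> E \<and> card X \<ge> k \<and> card (E - X) \<ge> k \<and> conn_fn E r X < k"

definition n_connected :: "nat \<Rightarrow> 'a set \<Rightarrow> ('a set \<Rightarrow> nat) \<Rightarrow> bool" where
  "n_connected n E r \<longleftrightarrow> matroid E r \<and> (\<forall>k X. 1 \<le> k \<and> k < n \<longrightarrow> \<not> k_separation E r k X)"

abbreviation three_connected :: "'a set \<Rightarrow> ('a set \<Rightarrow> nat) \<Rightarrow> bool" where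
  "three_connected E r \<equiv> n_connected 3 E r"

definition is_tangle :: "'a set \<Rightarrow> ('a set \<Rightarrow> nat) \<Rightarrow> 'a set set \<Rightarrow> nat \<Rightarrow> bool" where
  "is_tangle E r T \<theta> \<longleftrightarrow>
     T \<subseteq> Pow E
   \<and> (\<forall>X\<in>T. conn_fn E r X < \<theta>)
   \<and> (\<forall>X. X \<subseteq> E \<and> conn_fn E r X < \<theta> \<longrightarrow> X \<in> T \<or> E - X \<in> T)
   \<and> (\<forall>X\<in>T. \<forall>Y\<in>T. \<forall>Z\<in>T. X \<union> Y \<union> Z \<noteq> E)
   \<and> (\<forall>e\<in>E. E - {e} \<notin> T)"

definition tangle_rank :: "'a set \<Rightarrow> ('a set \<Rightarrow> nat) \<Rightarrow> 'a set set \<Rightarrow> nat \<Rightarrow> 'a set \<Rightarrow> nat" where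
  "tangle_rank E r T \<theta> X =
     (if \<exists>Y\<in>T. X \<subseteq> Y then Min {conn_fn E r Y | Y. Y \<in> T \<and> X \<subseteq> Y} else \<theta>)"

definition tangle_indep :: "'a set \<Rightarrow> ('a set \<Rightarrow> nat) \<Rightarrow> 'a set set \<Rightarrow> nat \<Rightarrow> 'a set \<Rightarrow> bool" where
  "tangle_indep E r T \<theta> X \<longleftrightarrow> X \<subseteq> E \<and> tangle_rank E r T \<theta> X = card X"

end

theory Submission
  imports Defs
begin


definition ml :: "'a set \<Rightarrow> ('a set \<Rightarrow> nat) \<Rightarrow> 'a set \<Rightarrow> 'a set \<Rightarrow> 'a set \<Rightarrow> int" where
  "ml E r C D X = int (r (X \<union> C)) + int (r ((E - C - D - X) \<union> C)) - int (r C) - int (r (E - D))"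

locale M3 = fixes E :: "'a set" and r :: "'a set \<Rightarrow> nat" assumes mat: "matroid E r"
begin

lemma fin: "finite E" using mat unfolding matroid_def by blast
lemma rc: "X \<subseteq> E \<Longrightarrow> r X \<le> card X" using mat unfolding matroid_def by blast
lemma rm: "X \<subseteq> Y \<Longrightarrow> Y \<subseteq> E \<Longrightarrow> r X \<le> r Y" using mat unfolding matroid_def by blast
lemma rs: "X \<subseteq> E \<Longrightarrow> Y \<subseteq> E \<Longrightarrow> r (X \<union> Y) + r (X \<inter> Y) \<le> r X + r Y"
  using mat unfolding matroid_def by blast
lemma rs': "X \<subseteq> E \<Longrightarrow> Y \<subseteq> E \<Longrightarrow> X \<union> Y = U \<Longrightarrow> X \<inter> Y = I \<Longrightarrow> r U + r I \<le> r X + r Y"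
  using rs by blast
lemma rmC: "C \<subseteq> E \<Longrightarrow> X \<subseteq> E \<Longrightarrow> r C \<le> r (X \<union> C)"
  using rm[of C "X \<union> C"] by auto
lemma r0: "r {} = 0" using rc[of "{}"] by simp

lemma r_ins: "X \<subseteq> E \<Longrightarrow> x \<in> E \<Longrightarrow> r (insert x X) \<le> r X + 1"
proof -
  assume a: "X \<subseteq> E" "x \<in> E"
  have "r (X \<union> {x}) + r (X \<inter> {x}) \<le> r X + r {x}" using rs[of X "{x}"] a by auto
  moreover have "r {x} \<le> 1" using rc[of "{x}"] a by auto
  ultimately show ?thesis by simp
qed

lemma r_un_card: "Z \<subseteq> E \<Longrightarrow> X \<subseteq> E \<Longrightarrow> r (X \<union> Z) \<le> r X + card Z"
proof -
  assume z: "Z \<subseteq> E" and x: "X \<subseteq> E"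
  have "finite Z" using z fin finite_subset by blast
  then show ?thesis using z
  proof (induction Z rule: finite_induct)
    case empty then show ?case by simp
  next
    case (insert a F)
    have "r (X \<union> insert a F) = r (insert a (X \<union> F))" by simp
    also have "\<dots> \<le> r (X \<union> F) + 1" using r_ins insert x by auto
    finally show ?case using insert by simp
  qed
qed

lemma indep_sub: "W \<subseteq> E \<Longrightarrow> r W = card W \<Longrightarrow> V \<subseteq> W \<Longrightarrow> r V = card V"
proof -
  assume a: "W \<subseteq> E" "r W = card W" "V \<subseteq> W"
  have fW: "finite W" using a fin finite_subset by blast
  have eq: "V \<union> (W - V) = W" using a by auto
  have "r (V \<union> (W - V)) \<le> r V + card (W - V)" using r_un_card[of "W - V" V] a by auto
  then have "r W \<le> r V + card (W - V)" by (metis eq)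
  moreover have "card W = card V + card (W - V)" using fW a
    by (metis card_Diff_subset card_mono diff_add_inverse2 finite_subset le_add_diff_inverse2 add.commute)
  moreover have "r V \<le> card V" using rc a by auto
  ultimately show ?thesis using a by linarith
qed

lemma cl_trans: "S \<subseteq> U \<Longrightarrow> U \<subseteq> E \<Longrightarrow> a \<in> E \<Longrightarrow> r (insert a S) = r S \<Longrightarrow> r (insert a U) = r U"
proof -
  assume a: "S \<subseteq> U" "U \<subseteq> E" "a \<in> E" "r (insert a S) = r S"
  show ?thesis
  proof (cases "a \<in> U")
    case True then show ?thesis by (simp add: insert_absorb)
  next
    case False
    have "r (insert a U) + r S \<le> r (insert a S) + r U"
      using a False by (intro rs') auto
    moreover have "r U \<le> r (insert a U)" using rm[of U "insert a U"] a by auto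
    ultimately show ?thesis using a by linarith
  qed
qed

lemma conn_eq: "X \<subseteq> E \<Longrightarrow> conn_fn E r X + r E = r X + r (E - X)"
proof -
  assume a: "X \<subseteq> E"
  have "r E + r {} \<le> r X + r (E - X)" using rs'[of X "E - X" E "{}"] a by auto
  then have "r E \<le> r X + r (E - X)" using r0 by simp
  then show ?thesis unfolding conn_fn_def by simp
qed

lemma conn_le_r: "X \<subseteq> E \<Longrightarrow> conn_fn E r X \<le> r X"
  using conn_eq[of X] rm[of "E - X" E] by auto

lemma conn_le_card: "X \<subseteq> E \<Longrightarrow> conn_fn E r X \<le> card X"
  using conn_le_r rc by (meson le_trans)

lemma conn_sym: "X \<subseteq> E \<Longrightarrow> conn_fn E r (E - X) = conn_fn E r X"
  unfolding conn_fn_def by (simp add: Diff_Diff_Int inf.absorb2 add.commute)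


lemma minor_matroid: "C \<subseteq> E \<Longrightarrow> matroid (E - C - D) (contr_rank r C)"
proof -
  assume C: "C \<subseteq> E"
  have "finite (E - C - D)" using fin by auto
  moreover have "\<forall>X. X \<subseteq> E - C - D \<longrightarrow> contr_rank r C X \<le> card X"
  proof (intro allI impI)
    fix X assume "X \<subseteq> E - C - D"
    then have "r (C \<union> X) \<le> r C + card X" using r_un_card[of X C] C by auto
    then show "contr_rank r C X \<le> card X" unfolding contr_rank_def by (simp add: Un_commute)
  qed
  moreover have "\<forall>X Y. X \<subseteq> Y \<and> Y \<subseteq> E - C - D \<longrightarrow> contr_rank r C X \<le> contr_rank r C Y"
  proof (intro allI impI)
    fix X Y assume "X \<subseteq> Y \<and> Y \<subseteq> E - C - D"
    then have "r (X \<union> C) \<le> r (Y \<union> C)" using rm[of "X \<union> C" "Y \<union> C"] C by auto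
    then show "contr_rank r C X \<le> contr_rank r C Y" unfolding contr_rank_def by simp
  qed
  moreover have "\<forall>X Y. X \<subseteq> E - C - D \<and> Y \<subseteq> E - C - D \<longrightarrow>
     contr_rank r C (X \<union> Y) + contr_rank r C (X \<inter> Y) \<le> contr_rank r C X + contr_rank r C Y"
  proof (intro allI impI)
    fix X Y assume a: "X \<subseteq> E - C - D \<and> Y \<subseteq> E - C - D"
    have h: "r ((X \<union> Y) \<union> C) + r ((X \<inter> Y) \<union> C) \<le> r (X \<union> C) + r (Y \<union> C)"
      using a C by (intro rs') auto
    have m1: "r C \<le> r ((X \<inter> Y) \<union> C)" "r C \<le> r ((X \<union> Y) \<union> C)"
       "r C \<le> r (X \<union> C)" "r C \<le> r (Y \<union> C)"
      using a C by (intro rmC; auto)+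
    show "contr_rank r C (X \<union> Y) + contr_rank r C (X \<inter> Y) \<le> contr_rank r C X + contr_rank r C Y"
      unfolding contr_rank_def using h m1 by linarith
  qed
  ultimately show ?thesis unfolding matroid_def by blast
qed

lemma ml_bridge: "C \<subseteq> E \<Longrightarrow> D \<subseteq> E \<Longrightarrow> C \<inter> D = {} \<Longrightarrow> X \<subseteq> E - C - D \<Longrightarrow>
   int (conn_fn (E - C - D) (contr_rank r C) X) = ml E r C D X"
proof -
  assume C: "C \<subseteq> E" and D: "D \<subseteq> E" and CD: "C \<inter> D = {}" and X: "X \<subseteq> E - C - D"
  have GC: "(E - C - D) \<union> C = E - D" using C CD by auto
  have h: "r (E - D) + r C \<le> r (X \<union> C) + r ((E - C - D - X) \<union> C)"
    using C X CD by (intro rs') auto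
  have m: "r C \<le> r (X \<union> C)" "r C \<le> r ((E - C - D - X) \<union> C)" "r C \<le> r (E - D)"
    using C X CD rmC[of C X] rmC[of C "E - C - D - X"] rm[of C "E - D"] by auto
  show ?thesis unfolding conn_fn_def contr_rank_def ml_def GC using h m by simp
qed

lemma ml_sym: "C \<subseteq> E \<Longrightarrow> X \<subseteq> E - C - D \<Longrightarrow> ml E r C D (E - C - D - X) = ml E r C D X"
  unfolding ml_def by (simp add: Diff_Diff_Int inf.absorb2)

lemma three_conn_char: "C \<subseteq> E \<Longrightarrow> D \<subseteq> E \<Longrightarrow> C \<inter> D = {} \<Longrightarrow>
  three_connected (E - C - D) (contr_rank r C) \<longleftrightarrow>
  (\<forall>X. X \<subseteq> E - C - D \<longrightarrow>
     (1 \<le> card X \<and> 1 \<le> card (E - C - D - X) \<longrightarrow> 1 \<le> ml E r C D X) \<and>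
     (2 \<le> card X \<and> 2 \<le> card (E - C - D - X) \<longrightarrow> 2 \<le> ml E r C D X))"
proof -
  assume C: "C \<subseteq> E" and D: "D \<subseteq> E" and CD: "C \<inter> D = {}"
  have br: "\<And>X k. X \<subseteq> E - C - D \<Longrightarrow> (conn_fn (E - C - D) (contr_rank r C) X < k) = (ml E r C D X < int k)"
    using ml_bridge[OF C D CD] by (metis of_nat_less_iff)
  have mm: "matroid (E - C - D) (contr_rank r C)" using minor_matroid C by blast
  show ?thesis
    unfolding n_connected_def k_separation_def
  proof (intro iffI allI impI conjI)
    fix X assume h: "matroid (E - C - D) (contr_rank r C) \<and>
          (\<forall>k X. 1 \<le> k \<and> k < 3 \<longrightarrow> \<not> (X \<subseteq> E - C - D \<and> k \<le> card X \<and> k \<le> card (E - C - D - X) \<and>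
                 conn_fn (E - C - D) (contr_rank r C) X < k))" and X: "X \<subseteq> E - C - D"
    { assume "1 \<le> card X \<and> 1 \<le> card (E - C - D - X)"
      then show "1 \<le> ml E r C D X" using h[THEN conjunct2, rule_format, of 1 X] X br[OF X, of 1] by auto }
    { assume "2 \<le> card X \<and> 2 \<le> card (E - C - D - X)"
      then show "2 \<le> ml E r C D X" using h[THEN conjunct2, rule_format, of 2 X] X br[OF X, of 2] by auto }
  next
    assume h: "\<forall>X. X \<subseteq> E - C - D \<longrightarrow>
       (1 \<le> card X \<and> 1 \<le> card (E - C - D - X) \<longrightarrow> 1 \<le> ml E r C D X) \<and>
       (2 \<le> card X \<and> 2 \<le> card (E - C - D - X) \<longrightarrow> 2 \<le> ml E r C D X)"
    show "matroid (E - C - D) (contr_rank r C)" by (rule mm)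
    fix k :: nat and X assume k: "1 \<le> k \<and> k < 3"
    show "\<not> (X \<subseteq> E - C - D \<and> k \<le> card X \<and> k \<le> card (E - C - D - X) \<and>
                 conn_fn (E - C - D) (contr_rank r C) X < k)"
    proof
      assume a: "X \<subseteq> E - C - D \<and> k \<le> card X \<and> k \<le> card (E - C - D - X) \<and>
                 conn_fn (E - C - D) (contr_rank r C) X < k"
      then have "ml E r C D X < int k" using br by blast
      moreover have "k = 1 \<or> k = 2" using k by auto
      moreover have hX: "(1 \<le> card X \<and> 1 \<le> card (E - C - D - X) \<longrightarrow> 1 \<le> ml E r C D X) \<and>
       (2 \<le> card X \<and> 2 \<le> card (E - C - D - X) \<longrightarrow> 2 \<le> ml E r C D X)"
        using h a by blast
      ultimately show False using a by auto
    qed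
  qed
qed

lemma UB: "C \<subseteq> E \<Longrightarrow> D \<subseteq> E \<Longrightarrow> C \<inter> D = {} \<Longrightarrow> A \<subseteq> E - C - D \<Longrightarrow>
  int (conn_fn E r (A \<union> C \<union> D)) \<le> ml E r C D A + int (card C) + int (card D)"
proof -
  assume C: "C \<subseteq> E" and D: "D \<subseteq> E" and CD: "C \<inter> D = {}" and A: "A \<subseteq> E - C - D"
  have e1: "conn_fn E r (A \<union> C \<union> D) + r E = r (A \<union> C \<union> D) + r (E - (A \<union> C \<union> D))"
    using conn_eq[of "A \<union> C \<union> D"] A C D by auto
  have e2: "E - (A \<union> C \<union> D) = E - C - D - A" by auto
  have i1: "r (A \<union> C \<union> D) \<le> r (A \<union> C) + card D" using r_un_card[of D "A \<union> C"] A C D by auto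
  have i2: "r (E - C - D - A) \<le> r ((E - C - D - A) \<union> C)" using rm[of "E - C - D - A" "(E - C - D - A) \<union> C"] C by auto
  have i3: "r (E - D) \<le> r E" using rm by auto
  have i4: "r C \<le> card C" using rc C by auto
  show ?thesis unfolding ml_def using e1 e2 i1 i2 i3 i4 by simp
qed

lemma del_le: "C \<subseteq> E \<Longrightarrow> D \<subseteq> E \<Longrightarrow> C \<inter> D = {} \<Longrightarrow> c \<in> E - C - D \<Longrightarrow> X \<subseteq> E - C - D \<Longrightarrow>
  ml E r C (insert c D) (X - {c}) \<le> ml E r C D X"
proof -
  assume C: "C \<subseteq> E" and D: "D \<subseteq> E" and CD: "C \<inter> D = {}" and c: "c \<in> E - C - D" and X: "X \<subseteq> E - C - D"
  show ?thesis
  proof (cases "c \<in> X")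
    case False
    define Y where "Y = (E - C - insert c D - X) \<union> C"
    have eY: "(E - C - D - X) \<union> C = insert c Y" using c False unfolding Y_def by auto
    have "r (E - D) + r Y \<le> r (insert c Y) + r (E - insert c D)"
      using c C D CD unfolding Y_def by (intro rs') auto
    then show ?thesis unfolding ml_def using False eY Y_def by simp
  next
    case True
    have e1: "E - C - insert c D - (X - {c}) = E - C - D - X" using True by auto
    have e2: "X \<union> C = insert c ((X - {c}) \<union> C)" using True by auto
    have "r (E - D) + r ((X - {c}) \<union> C) \<le> r (insert c ((X - {c}) \<union> C)) + r (E - insert c D)"
      using c C D CD X by (intro rs') auto
    then show ?thesis unfolding ml_def using e1 e2 by simp
  qed
qed

lemma con_le: "C \<subseteq> E \<Longrightarrow> D \<subseteq> E \<Longrightarrow> C \<inter> D = {} \<Longrightarrow> c \<in> E - C - D \<Longrightarrow> X \<subseteq> E - C - D \<Longrightarrow>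
  ml E r (insert c C) D (X - {c}) \<le> ml E r C D X"
proof -
  assume C: "C \<subseteq> E" and D: "D \<subseteq> E" and CD: "C \<inter> D = {}" and c: "c \<in> E - C - D" and X: "X \<subseteq> E - C - D"
  show ?thesis
  proof (cases "c \<in> X")
    case False
    have e1: "(E - insert c C - D - X) \<union> insert c C = (E - C - D - X) \<union> C" using c False by auto
    have "r (insert c (X \<union> C)) + r C \<le> r (X \<union> C) + r (insert c C)"
      using c C X False by (intro rs') auto
    then show ?thesis unfolding ml_def using e1 False by simp
  next
    case True
    define Z where "Z = (E - C - D - X) \<union> C"
    have e1: "(E - insert c C - D - (X - {c})) \<union> insert c C = insert c Z" using True unfolding Z_def by auto
    have e2: "(X - {c}) \<union> insert c C = X \<union> C" using True by auto
    have "r (insert c Z) + r C \<le> r Z + r (insert c C)"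
      using c C X True unfolding Z_def by (intro rs') auto
    then show ?thesis unfolding ml_def using e1 e2 Z_def by simp
  qed
qed

lemma contr_empty: "contr_rank r {} = r"
  unfolding contr_rank_def using r0 by (simp add: fun_eq_iff)

end



locale S = M3 E r for E :: "'a set" and r +
  fixes T :: "'a set set" and \<theta> :: nat and C D :: "'a set"
  assumes tang: "is_tangle E r T \<theta>" and CE: "C \<subseteq> E" and DE: "D \<subseteq> E" and CD: "C \<inter> D = {}"
    and ind: "tangle_indep E r T \<theta> (C \<union> D)"
    and N0c: "three_connected (E - C - D) (contr_rank r C)"
    and M3c: "three_connected E r"
begin

lemma tp: "T \<subseteq> Pow E"
   "\<forall>X\<in>T. conn_fn E r X < \<theta>"
   "\<forall>X. X \<subseteq> E \<and> conn_fn E r X < \<theta> \<longrightarrow> X \<in> T \<or> E - X \<in> T"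
   "\<forall>X\<in>T. \<forall>Y\<in>T. \<forall>Z\<in>T. X \<union> Y \<union> Z \<noteq> E"
   "\<forall>e\<in>E. E - {e} \<notin> T"
  using tang unfolding is_tangle_def by simp_all

lemma T_sub: "X \<in> T \<Longrightarrow> X \<subseteq> E" using tp(1) by auto
lemma T_lt: "X \<in> T \<Longrightarrow> conn_fn E r X < \<theta>" using tp(2) by auto
lemma T_dec: "X \<subseteq> E \<Longrightarrow> conn_fn E r X < \<theta> \<Longrightarrow> X \<in> T \<or> E - X \<in> T"
  using tp(3) by auto
lemma T_cov: "X \<in> T \<Longrightarrow> Y \<in> T \<Longrightarrow> Z \<in> T \<Longrightarrow> X \<union> Y \<union> Z \<noteq> E"
  using tp(4) by auto
lemma T_iv: "e \<in> E \<Longrightarrow> E - {e} \<notin> T" using tp(5) by auto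

lemma T_union: "X \<in> T \<Longrightarrow> Y \<in> T \<Longrightarrow> conn_fn E r (X \<union> Y) < \<theta> \<Longrightarrow> X \<union> Y \<in> T"
proof (rule ccontr)
  assume a: "X \<in> T" "Y \<in> T" "conn_fn E r (X \<union> Y) < \<theta>" "X \<union> Y \<notin> T"
  have "X \<union> Y \<subseteq> E" using a T_sub by auto
  then have "E - (X \<union> Y) \<in> T" using T_dec a by blast
  moreover have "X \<union> Y \<union> (E - (X \<union> Y)) = E" using \<open>X \<union> Y \<subseteq> E\<close> by auto
  ultimately show False using T_cov[of X Y "E - (X \<union> Y)"] a by auto
qed

lemma E_notT: "E \<notin> T" using T_cov[of E E E] by auto

lemma T_small: "Q \<subseteq> E \<Longrightarrow> card Q < \<theta> \<Longrightarrow> Q \<in> T"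
proof -
  assume Q: "Q \<subseteq> E" and c: "card Q < \<theta>"
  have "finite Q" using Q fin finite_subset by blast
  then show ?thesis using Q c
  proof (induction Q rule: finite_induct)
    case empty
    have "conn_fn E r {} < \<theta>" using conn_le_card[of "{}"] empty by auto
    then show ?case using T_dec[of "{}"] E_notT by auto
  next
    case (insert q F)
    have F: "F \<in> T" using insert by auto
    have cq: "conn_fn E r (insert q F) < \<theta>" using conn_le_card[of "insert q F"] insert by auto
    show ?case
    proof (rule ccontr)
      assume "insert q F \<notin> T"
      then have X: "E - insert q F \<in> T" using T_dec[OF insert(4) cq] by auto
      have eq: "(E - insert q F) \<union> F = E - {q}" using insert by auto
      have "conn_fn E r (E - {q}) = conn_fn E r {q}" using conn_sym[of "{q}"] insert by auto
      also have "\<dots> \<le> 1" using conn_le_card[of "{q}"] insert by auto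
      finally have "conn_fn E r (E - {q}) < \<theta>" using insert by (simp add: card_insert_if)
      then have "E - {q} \<in> T" using T_union[OF X F] eq by simp
      then show False using T_iv insert by auto
    qed
  qed
qed

lemma finT: "finite T"
proof -
  have "T \<subseteq> Pow E" using T_sub by auto
  then show ?thesis using fin finite_subset by blast
qed

lemma tr_le: "Y \<in> T \<Longrightarrow> C \<union> D \<subseteq> Y \<Longrightarrow> card (C \<union> D) \<le> conn_fn E r Y"
proof -
  assume a: "Y \<in> T" "C \<union> D \<subseteq> Y"
  have tr: "tangle_rank E r T \<theta> (C \<union> D) = card (C \<union> D)" using ind unfolding tangle_indep_def by blast
  have fs: "finite {conn_fn E r Y | Y. Y \<in> T \<and> C \<union> D \<subseteq> Y}" using finT by simp
  have "Min {conn_fn E r Y | Y. Y \<in> T \<and> C \<union> D \<subseteq> Y} \<le> conn_fn E r Y"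
    using fs a by (intro Min_le) auto
  moreover have ex: "\<exists>Y\<in>T. C \<union> D \<subseteq> Y" using a by blast
  moreover have "tangle_rank E r T \<theta> (C \<union> D) = Min {conn_fn E r Y | Y. Y \<in> T \<and> C \<union> D \<subseteq> Y}"
    unfolding tangle_rank_def using ex by (simp only: if_P)
  ultimately show ?thesis using tr by simp
qed

lemma theta_ge: "card (C \<union> D) \<le> \<theta>"
proof -
  have tr: "tangle_rank E r T \<theta> (C \<union> D) = card (C \<union> D)" using ind unfolding tangle_indep_def by blast
  show ?thesis
  proof (cases "\<exists>Y\<in>T. C \<union> D \<subseteq> Y")
    case True
    then obtain Y where "Y \<in> T" "C \<union> D \<subseteq> Y" by blast
    then show ?thesis using tr_le T_lt by fastforce
  next
    case False
    have "tangle_rank E r T \<theta> (C \<union> D) = \<theta>" unfolding tangle_rank_def using False by (simp only: if_False if_not_P)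
    then show ?thesis using tr by simp
  qed
qed

lemma WE: "C \<union> D \<subseteq> E" using CE DE by auto
lemma finW: "finite (C \<union> D)" using WE fin finite_subset by blast

lemma E0_notT: "D \<noteq> {} \<Longrightarrow> E - (C \<union> D) \<notin> T"
proof
  assume D: "D \<noteq> {}" and E0: "E - (C \<union> D) \<in> T"
  obtain w where w: "w \<in> C \<union> D" using D by blast
  have n1: "card (C \<union> D) \<ge> 1" using w finW by (metis One_nat_def Suc_leI card_gt_0_iff empty_iff)
  show False
  proof (cases "\<theta> \<ge> 2")
    case True
    have "{w} \<in> T" using T_small[of "{w}"] True w WE by auto
    moreover have "C \<union> D - {w} \<in> T"
    proof (rule T_small)
      show "C \<union> D - {w} \<subseteq> E" using WE by auto
      show "card (C \<union> D - {w}) < \<theta>" using theta_ge n1 w finW by (simp add: card_Diff_singleton)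
    qed
    moreover have "(E - (C \<union> D)) \<union> (C \<union> D - {w}) \<union> {w} = E" using w WE by auto
    ultimately show False using T_cov E0 by blast
  next
    case False
    then have "card (C \<union> D) = 1" using theta_ge n1 by auto
    then have "C \<union> D = {w}" using w by (metis card_1_singletonE singletonD)
    then show False using T_iv[of w] E0 w WE by auto
  qed
qed

lemma F1: "D \<noteq> {} \<Longrightarrow> r (C \<union> D) = card (C \<union> D) \<and> r (E - (C \<union> D)) = r E \<and> conn_fn E r (C \<union> D) = card (C \<union> D)"
proof -
  assume D: "D \<noteq> {}"
  have a: "conn_fn E r (C \<union> D) \<le> r (C \<union> D)" "r (C \<union> D) \<le> card (C \<union> D)" using conn_le_r rc WE by auto
  have b: "card (C \<union> D) \<le> conn_fn E r (C \<union> D)"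
  proof (cases "conn_fn E r (C \<union> D) < \<theta>")
    case True
    then have "C \<union> D \<in> T" using T_dec[OF WE] E0_notT[OF D] by auto
    then show ?thesis using tr_le by auto
  next
    case False then show ?thesis using theta_ge by auto
  qed
  have "conn_fn E r (C \<union> D) + r E = r (C \<union> D) + r (E - (C \<union> D))" using conn_eq WE by auto
  then show ?thesis using a b by auto
qed

lemma G_lem: "card (C \<union> D) \<ge> 3 \<Longrightarrow> C \<union> D \<subseteq> Y \<Longrightarrow> Y \<subseteq> E \<Longrightarrow> card (Y - (C \<union> D)) \<le> 1 \<Longrightarrow>
   conn_fn E r Y < card (C \<union> D) \<Longrightarrow> False"
proof -
  assume n3: "card (C \<union> D) \<ge> 3" and Y: "C \<union> D \<subseteq> Y" "Y \<subseteq> E" "card (Y - (C \<union> D)) \<le> 1"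
    and l: "conn_fn E r Y < card (C \<union> D)"
  have "C \<union> D \<noteq> {}" using n3 by auto
  then obtain w where w: "w \<in> C \<union> D" by blast
  have fY: "finite Y" using Y fin finite_subset by blast
  have "C \<union> D - {w} \<in> T"
  proof (rule T_small)
    show "C \<union> D - {w} \<subseteq> E" using WE by auto
    show "card (C \<union> D - {w}) < \<theta>" using theta_ge n3 w finW by (simp add: card_Diff_singleton)
  qed
  moreover have "insert w (Y - (C \<union> D)) \<in> T"
  proof (rule T_small)
    show "insert w (Y - (C \<union> D)) \<subseteq> E" using w Y WE by auto
    have "card (insert w (Y - (C \<union> D))) \<le> Suc (card (Y - (C \<union> D)))"
      using fY by (simp add: card_insert_if)
    then have "card (insert w (Y - (C \<union> D))) \<le> 2" using Y by linarith
    then show "card (insert w (Y - (C \<union> D))) < \<theta>" using n3 theta_ge by auto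
  qed
  moreover have "(C \<union> D - {w}) \<union> insert w (Y - (C \<union> D)) = Y" using w Y by auto
  ultimately have "Y \<in> T" using T_union l theta_ge by (metis order_less_le_trans)
  then show False using tr_le Y l by fastforce
qed

end



context S begin

lemma indepW: "D \<noteq> {} \<Longrightarrow> V \<subseteq> C \<union> D \<Longrightarrow> r V = card V"
  using F1 indep_sub WE by blast

lemma cardW: "card (C \<union> D) = card C + card D"
  using finW CD by (simp add: card_Un_disjoint)

lemma N_fail:
  assumes d: "d \<in> D" and nc: "\<not> three_connected (E - C - (D - {d})) (contr_rank r C)"
  shows "\<exists>e. e \<in> E - C - D \<and> r (insert d (insert e C)) = card C + 1 \<and> r (insert e C) = card C + 1
     \<and> 3 \<le> card (E - C - D) \<and> r (E - (D - {d})) = r (E - D)"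
proof -
  have DD: "D \<noteq> {}" using d by auto
  have D1: "D - {d} \<subseteq> E" "C \<inter> (D - {d}) = {}" using DE CD by auto
  have dC: "d \<notin> C" using d CD by auto
  have Gd: "E - C - (D - {d}) = insert d (E - C - D)" using d dC DE by auto
  have fE0: "finite (E - C - D)" using fin by auto
  let ?G = "E - C - (D - {d})"
  have ch: "three_connected ?G (contr_rank r C) \<longleftrightarrow> (\<forall>X. X \<subseteq> ?G \<longrightarrow>
     (1 \<le> card X \<and> 1 \<le> card (?G - X) \<longrightarrow> 1 \<le> ml E r C (D - {d}) X) \<and>
     (2 \<le> card X \<and> 2 \<le> card (?G - X) \<longrightarrow> 2 \<le> ml E r C (D - {d}) X))"
    by (rule three_conn_char[OF CE D1])
  have "\<not> (\<forall>X. X \<subseteq> ?G \<longrightarrow>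
     (1 \<le> card X \<and> 1 \<le> card (?G - X) \<longrightarrow> 1 \<le> ml E r C (D - {d}) X) \<and>
     (2 \<le> card X \<and> 2 \<le> card (?G - X) \<longrightarrow> 2 \<le> ml E r C (D - {d}) X))"
    using nc ch by simp
  then obtain X where X: "X \<subseteq> ?G" and bad0: "\<not> ((1 \<le> card X \<and> 1 \<le> card (?G - X) \<longrightarrow> 1 \<le> ml E r C (D - {d}) X) \<and>
     (2 \<le> card X \<and> 2 \<le> card (?G - X) \<longrightarrow> 2 \<le> ml E r C (D - {d}) X))" by blast
  obtain k :: nat where kX: "k = 1 \<or> k = 2" "k \<le> card X" "k \<le> card (?G - X)" "ml E r C (D - {d}) X < int k"
  proof (cases "1 \<le> card X \<and> 1 \<le> card (?G - X) \<longrightarrow> 1 \<le> ml E r C (D - {d}) X")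
    case True
    then have "2 \<le> card X" "2 \<le> card (?G - X)" "ml E r C (D - {d}) X < 2" using bad0 by auto
    then show ?thesis using that[of 2] by auto
  next
    case False
    then have "1 \<le> card X" "1 \<le> card (?G - X)" "ml E r C (D - {d}) X < 1" by auto
    then show ?thesis using that[of 1] by auto
  qed
  obtain A where A: "A \<subseteq> ?G" "d \<in> A" and k: "k = 1 \<or> k = 2"
    "k \<le> card A" "k \<le> card (?G - A)" "ml E r C (D - {d}) A < int k"
  proof (cases "d \<in> X")
    case True
    show ?thesis using that[of X] X True kX by blast
  next
    case False
    have s: "ml E r C (D - {d}) (?G - X) = ml E r C (D - {d}) X" using ml_sym CE X by blast
    have dd: "?G - (?G - X) = X" using X by auto
    have dG: "d \<in> ?G - X" using False Gd by auto
    show ?thesis using that[of "?G - X"] X dG kX s dd by auto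
  qed
  have ins: "insert d (D - {d}) = D" using d by auto
  have l0: "ml E r C D (A - {d}) \<le> ml E r C (D - {d}) A"
    using del_le[OF CE D1(1) D1(2), of d A] A ins Gd by auto
  have GA: "E - C - (D - {d}) - A = E - C - D - (A - {d})" unfolding Gd using A(2) d by auto
  have AE0: "A - {d} \<subseteq> E - C - D" using A Gd by auto
  have N0ch: "\<forall>X. X \<subseteq> E - C - D \<longrightarrow>
     (1 \<le> card X \<and> 1 \<le> card (E - C - D - X) \<longrightarrow> 1 \<le> ml E r C D X) \<and>
     (2 \<le> card X \<and> 2 \<le> card (E - C - D - X) \<longrightarrow> 2 \<le> ml E r C D X)"
    using N0c three_conn_char[OF CE DE CD] by blast
  have ck: "card (A - {d}) < k"
  proof (rule ccontr)
    assume "\<not> card (A - {d}) < k"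
    then show False using N0ch[rule_format, OF AE0] k l0 GA by auto
  qed
  have u: "int (conn_fn E r ({d} \<union> C \<union> (D - {d}))) \<le> ml E r C (D - {d}) {d} + int (card C) + int (card (D - {d}))"
    using UB[OF CE D1(1) D1(2), of "{d}"] Gd by auto
  have "{d} \<union> C \<union> (D - {d}) = C \<union> D" using d by auto
  then have "conn_fn E r ({d} \<union> C \<union> (D - {d})) = card C + card D" using F1[OF DD] cardW by simp
  moreover have "card (D - {d}) + 1 = card D" using d DE fin
    by (metis One_nat_def card_Suc_Diff1 finite_subset plus_1_eq_Suc add.commute)
  ultimately have ld: "1 \<le> ml E r C (D - {d}) {d}" using u by linarith
  have "k \<noteq> 1"
  proof
    assume "k = 1"
    then have "A - {d} = {}" using ck fE0 AE0 by (metis card_0_eq finite_subset less_one)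
    then have "A = {d}" using A by auto
    then show False using ld k \<open>k = 1\<close> by auto
  qed
  then have k2: "k = 2" using k by auto
  have "card A = card (A - {d}) + 1" using A fE0 AE0
    by (metis One_nat_def card_Suc_Diff1 finite_insert finite_subset Gd add.commute plus_1_eq_Suc)
  then have "card (A - {d}) = 1" using ck k k2 by auto
  then obtain e where e: "A - {d} = {e}" by (meson card_1_singletonE)
  have eE0: "e \<in> E - C - D" using e AE0 by auto
  have Ade: "A = {d, e}" using e A by auto
  have c3: "3 \<le> card (E - C - D)"
  proof -
    have "2 \<le> card (E - C - D - {e})" using k k2 GA e by auto
    moreover have "card (E - C - D - {e}) + 1 = card (E - C - D)" using eE0 fE0
      by (metis One_nat_def card_Suc_Diff1 plus_1_eq_Suc add.commute)
    ultimately show ?thesis by linarith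
  qed
  have rC: "r C = card C" using indepW[OF DD] by auto
  have rCd: "r (insert d C) = card C + 1" using indepW[OF DD, of "insert d C"] d dC finW
    by (metis Un_upper1 card_insert_disjoint finite_subset insert_subset UnI2 Suc_eq_plus1 CE fin)
  have edC: "e \<noteq> d" "e \<notin> C" using eE0 d by auto
  have s1: "E - C - (D - {d}) - {d} \<union> C = E - D" using Gd dC d CE CD by auto
  have ld': "1 + int (r C) + int (r (E - (D - {d}))) \<le> int (r (insert d C)) + int (r (E - D))"
    using ld unfolding ml_def using s1 by (simp add: insert_commute)
  have rED1: "r (E - (D - {d})) = r (E - D)"
  proof -
    have "r (E - D) \<le> r (E - (D - {d}))" using rm[of "E - D" "E - (D - {d})"] by auto
    then show ?thesis using ld' rC rCd by linarith
  qed
  have le1: "1 \<le> ml E r C D {e}"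
  proof -
    have "1 \<le> card {e}" "1 \<le> card (E - C - D - {e})" using c3 eE0 fE0
      by (auto simp: card_Diff_singleton)
    then show ?thesis using N0ch[rule_format, of "{e}"] eE0 by auto
  qed
  have s2: "(E - C - D - {e}) \<union> C \<subseteq> E - D" "E - D \<subseteq> E" using CE CD by auto
  have rCe_le: "r (insert e C) \<le> r C + 1" using r_ins CE eE0 by auto
  have le1': "1 + int (r C) + int (r (E - D)) \<le> int (r (insert e C)) + int (r ((E - C - D - {e}) \<union> C))"
    using le1 unfolding ml_def by simp
  have m2: "r ((E - C - D - {e}) \<union> C) \<le> r (E - D)" using rm s2 by blast
  have rCe: "r (insert e C) = card C + 1" using le1' m2 rCe_le rC by linarith
  have rE0e: "r ((E - C - D - {e}) \<union> C) = r (E - D)" using le1' m2 rCe_le rC by linarith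
  have lde: "ml E r C (D - {d}) {d, e} < 2" using k k2 Ade by auto
  have s3: "E - C - (D - {d}) - {d, e} = E - C - D - {e}" unfolding Gd using d by auto
  have lde': "int (r (insert d (insert e C))) + int (r ((E - C - D - {e}) \<union> C)) < 2 + int (r C) + int (r (E - (D - {d})))"
    using lde unfolding ml_def s3 by simp
  have rCde: "r (insert d (insert e C)) = card C + 1"
  proof -
    have "r (insert d C) \<le> r (insert d (insert e C))" using rm[of "insert d C" "insert d (insert e C)"] CE eE0 d DE by auto
    then show ?thesis using lde' rE0e rED1 rC rCd by linarith
  qed
  show ?thesis using eE0 rCde rCe c3 rED1 by blast
qed


lemma M_char: "X \<subseteq> E \<Longrightarrow> 2 \<le> card X \<Longrightarrow> 2 \<le> card (E - X) \<Longrightarrow> 2 \<le> int (r X) + int (r (E - X)) - int (r E)"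
proof -
  assume a: "X \<subseteq> E" "2 \<le> card X" "2 \<le> card (E - X)"
  have "three_connected (E - {} - {}) (contr_rank r {})" using M3c contr_empty by simp
  then have "2 \<le> ml E r {} {} X" using three_conn_char[of "{}" "{}"] a by auto
  then show ?thesis unfolding ml_def using r0 by simp
qed

lemma K_lem:
  assumes d: "d \<in> D" and e: "e \<in> E - C - D" and c3: "3 \<le> card (E - C - D)"
    and rde: "r (insert d (insert e C)) = card C + 1"
  shows "\<exists>c\<in>C. r (insert d (insert e (C - {c}))) = card C + 1"
proof -
  define P where "P = (\<lambda>K. K \<subseteq> C \<and> r (insert d (insert e K)) \<le> card K + 1)"
  have "P C" unfolding P_def using rde by simp
  then obtain K where K: "P K" and Kmin: "\<And>K'. P K' \<Longrightarrow> card K \<le> card K'"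
    using ex_has_least_nat[of P C card] by blast
  have KC: "K \<subseteq> C" using K P_def by auto
  have fC: "finite C" using CE fin finite_subset by blast
  have fK: "finite K" using KC fC finite_subset by blast
  have deC: "d \<notin> C" "e \<notin> C" "d \<noteq> e" using d e CD by auto
  have "K \<noteq> {}"
  proof
    assume "K = {}"
    then have r2: "r {d, e} \<le> 1" using K unfolding P_def by simp
    have sub: "{d, e} \<subseteq> E" using d e DE by auto
    have "E - C - D - {e} \<subseteq> E - {d, e}" using d by auto
    moreover have "card (E - C - D - {e}) \<ge> 2" using c3 e fin by (simp add: card_Diff_singleton)
    ultimately have "2 \<le> card (E - {d, e})" using fin by (meson card_mono finite_Diff le_trans)
    moreover have "2 \<le> card {d, e}" using deC by simp
    ultimately have "2 \<le> int (r {d, e}) + int (r (E - {d, e})) - int (r E)" using M_char sub by blast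
    moreover have "r (E - {d, e}) \<le> r E" using rm by auto
    ultimately show False using r2 by linarith
  qed
  then obtain c where cK: "c \<in> K" by blast
  have cC: "c \<in> C" using cK KC by auto
  have "\<not> P (K - {c})"
  proof
    assume "P (K - {c})"
    then have "card K \<le> card (K - {c})" using Kmin by blast
    moreover have "card (K - {c}) < card K" using cK fK by (meson card_Diff1_less)
    ultimately show False by simp
  qed
  then have r1: "card (K - {c}) + 1 < r (insert d (insert e (K - {c})))" unfolding P_def using KC by auto
  have "card K > 0" using cK fK by (auto simp: card_gt_0_iff)
  then have ckc: "card (K - {c}) + 1 = card K" using cK fK by (simp add: card_Diff_singleton)
  have sm: "r (insert d (insert e C)) + r (insert d (insert e (K - {c}))) \<le> r (insert d (insert e (C - {c}))) + r (insert d (insert e K))"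
    using KC cK cC deC d e CE DE by (intro rs') auto
  have rK: "r (insert d (insert e K)) \<le> card K + 1" using K unfolding P_def by simp
  have up: "r (insert d (insert e (C - {c}))) \<le> r (insert d (insert e C))"
    using rm[of "insert d (insert e (C - {c}))" "insert d (insert e C)"] d e CE DE by auto
  show ?thesis using sm r1 ckc rK up rde cC by (intro bexI[of _ c]) linarith+
qed

end



locale S2 = S E r T \<theta> C D for E :: "'a set" and r T \<theta> C D +
  fixes c d e :: 'a
  assumes d: "d \<in> D" and e: "e \<in> E - C - D" and c: "c \<in> C" and n3: "3 \<le> card (C \<union> D)"
  and rCde: "r (insert d (insert e C)) = card C + 1"
  and rCe: "r (insert e C) = card C + 1"
  and rED1: "r (E - (D - {d})) = r (E - D)"
  and rCpde: "r (insert d (insert e (C - {c}))) = card C + 1"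
  and E04: "4 \<le> card (E - C - D)"
begin

lemma DD: "D \<noteq> {}" using d by auto
lemma basic: "d \<notin> C" "e \<notin> C" "e \<notin> D" "c \<notin> D" "c \<in> E" "d \<in> E" "e \<in> E" "c \<noteq> d" "c \<noteq> e" "d \<noteq> e"
  using c d e CD CE DE by auto
lemma fC: "finite C" using CE fin finite_subset by blast
lemma fD: "finite D" using DE fin finite_subset by blast
lemma cC1: "card C \<ge> 1" using c fC by (metis One_nat_def Suc_leI card_gt_0_iff empty_iff)
lemma rC: "r C = card C" using indepW[OF DD] by auto
lemma rCp: "r (C - {c}) = card C - 1" using indepW[OF DD, of "C - {c}"] c fC by (auto simp: card_Diff_singleton)
lemma rCpd: "r (insert d (C - {c})) = card C"
proof -
  have "r (insert d (C - {c})) = card (insert d (C - {c}))" using indepW[OF DD, of "insert d (C - {c})"] d by auto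
  also have "\<dots> = card C" using basic fC c cC1 by (simp add: card_Diff_singleton)
  finally show ?thesis .
qed
lemma Cp: "C - {c} \<subseteq> E" "D - {d} \<subseteq> E" "(C - {c}) \<inter> (D - {d}) = {}" using CE DE CD by auto
lemma Gp: "E - (C - {c}) - (D - {d}) = insert c (insert d (E - C - D))" using basic c d CE DE CD by auto
lemma GpC: "E - (C - {c}) - (D - {d}) \<union> (C - {c}) = E - (D - {d})" using Gp basic CE CD c by auto
lemma cards: "card (C - {c}) + card (D - {d}) + 2 = card (C \<union> D)"
proof -
  have "card D \<ge> 1" using d fD by (metis One_nat_def Suc_leI card_gt_0_iff empty_iff)
  then have "card (C - {c}) + 1 = card C" "card (D - {d}) + 1 = card D" using c d fC fD cC1
    by (auto simp: card_Diff_singleton)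
  then show ?thesis using cardW by simp
qed

lemma N0ch: "X \<subseteq> E - C - D \<Longrightarrow>
     (1 \<le> card X \<and> 1 \<le> card (E - C - D - X) \<longrightarrow> 1 \<le> ml E r C D X) \<and>
     (2 \<le> card X \<and> 2 \<le> card (E - C - D - X) \<longrightarrow> 2 \<le> ml E r C D X)"
  using N0c three_conn_char[OF CE DE CD] by blast

lemma caseA: "A \<subseteq> E - (C - {c}) - (D - {d}) \<Longrightarrow> c \<in> A \<Longrightarrow> d \<in> A \<Longrightarrow> card (A \<inter> (E - C - D)) \<le> 1 \<Longrightarrow>
   ml E r (C - {c}) (D - {d}) A \<le> 1 \<Longrightarrow> False"
proof -
  assume A: "A \<subseteq> E - (C - {c}) - (D - {d})" "c \<in> A" "d \<in> A" "card (A \<inter> (E - C - D)) \<le> 1"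
    and l: "ml E r (C - {c}) (D - {d}) A \<le> 1"
  let ?Y = "A \<union> (C - {c}) \<union> (D - {d})"
  have u: "int (conn_fn E r ?Y) \<le> ml E r (C - {c}) (D - {d}) A + int (card (C - {c})) + int (card (D - {d}))"
    using UB[OF Cp A(1)] by blast
  have lt: "conn_fn E r ?Y < card (C \<union> D)" using u l cards by linarith
  have sub: "C \<union> D \<subseteq> ?Y" using A by auto
  have YE: "?Y \<subseteq> E" using A Cp by auto
  have "?Y - (C \<union> D) = A \<inter> (E - C - D)" using A by auto
  then have "card (?Y - (C \<union> D)) \<le> 1" using A by simp
  then show False using G_lem[OF n3 sub YE] lt by blast
qed

lemma mlp_def2: "X \<subseteq> E - (C - {c}) - (D - {d}) \<Longrightarrow> ml E r (C - {c}) (D - {d}) X =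
  int (r (X \<union> (C - {c}))) + int (r ((E - (C - {c}) - (D - {d}) - X) \<union> (C - {c}))) - int (card C - 1) - int (r (E - D))"
  unfolding ml_def using rCp rED1 by simp

lemma move: "t = c \<or> t = d \<Longrightarrow> ml E r (C - {c}) (D - {d}) {c, d, e} \<le> ml E r (C - {c}) (D - {d}) {t, e}"
proof -
  assume t: "t = c \<or> t = d"
  have s1: "{c, d, e} \<subseteq> E - (C - {c}) - (D - {d})" "{t, e} \<subseteq> E - (C - {c}) - (D - {d})"
    using t Gp basic e by auto
  have r1: "r ({c, d, e} \<union> (C - {c})) = card C + 1"
  proof -
    have "{c, d, e} \<union> (C - {c}) = insert d (insert e C)" using c by auto
    then show ?thesis using rCde by simp
  qed
  have r2: "r ({t, e} \<union> (C - {c})) = card C + 1"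
  proof (cases "t = c")
    case True
    have "{t, e} \<union> (C - {c}) = insert e C" using c True by auto
    then show ?thesis using rCe by simp
  next
    case False
    then have "{t, e} \<union> (C - {c}) = insert d (insert e (C - {c}))" using t by auto
    then show ?thesis using rCpde by simp
  qed
  have m: "r ((E - (C - {c}) - (D - {d}) - {c, d, e}) \<union> (C - {c})) \<le> r ((E - (C - {c}) - (D - {d}) - {t, e}) \<union> (C - {c}))"
    using t CE by (intro rm) auto
  show ?thesis using mlp_def2[OF s1(1)] mlp_def2[OF s1(2)] r1 r2 m by simp
qed

lemma single: "t = c \<or> t = d \<Longrightarrow> ml E r (C - {c}) (D - {d}) {t} = 1"
proof -
  assume t: "t = c \<or> t = d"
  define s where "s = (if t = c then d else c)"
  have st: "{s, t} = {c, d}" unfolding s_def using t basic by auto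
  define B where "B = (E - (C - {c}) - (D - {d}) - {t}) \<union> (C - {c})"
  have Bsub: "insert s (insert e (C - {c})) \<subseteq> B" unfolding B_def using st Gp basic e by auto
  have BE: "B \<subseteq> E" unfolding B_def using CE by auto
  have rS: "r (insert t (insert s (insert e (C - {c})))) = r (insert s (insert e (C - {c})))"
  proof -
    have "insert t (insert s (insert e (C - {c}))) = insert d (insert e C)" using st c by auto
    moreover have "r (insert s (insert e (C - {c}))) = card C + 1"
    proof (cases "s = c")
      case True
      then have "insert s (insert e (C - {c})) = insert e C" using c by auto
      then show ?thesis using rCe by simp
    next
      case False
      then have "s = d" using st by auto
      then show ?thesis using rCpde by simp
    qed
    ultimately show ?thesis using rCde by simp
  qed
  have tE: "t \<in> E" using t basic by auto
  have "r (insert t B) = r B" using cl_trans[OF Bsub BE tE rS] .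
  moreover have "insert t B = E - (D - {d})" unfolding B_def using GpC t basic Gp by auto
  moreover have "r ({t} \<union> (C - {c})) = card C"
  proof (cases "t = c")
    case True
    then have "{t} \<union> (C - {c}) = C" using c by auto
    then show ?thesis using rC by simp
  next
    case False
    then have "{t} \<union> (C - {c}) = insert d (C - {c})" using t by auto
    then show ?thesis using rCpd by simp
  qed
  moreover have "{t} \<subseteq> E - (C - {c}) - (D - {d})" using t Gp by auto
  ultimately show ?thesis using mlp_def2[of "{t}"] rED1 cC1 unfolding B_def by simp
qed

lemma tc: "x \<in> E - C - D \<Longrightarrow> x \<noteq> e \<Longrightarrow> ml E r (C - {c}) (D - {d}) {c, x} \<le> 1 \<Longrightarrow> False"
proof -
  assume x: "x \<in> E - C - D" "x \<noteq> e" and l: "ml E r (C - {c}) (D - {d}) {c, x} \<le> 1"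
  define B where "B = insert d (E - C - D - {x}) \<union> (C - {c})"
  have Bsub: "insert d (insert e (C - {c})) \<subseteq> B" unfolding B_def using e x by auto
  have BE: "B \<subseteq> E" unfolding B_def using CE basic by auto
  have rS: "r (insert c (insert d (insert e (C - {c})))) = r (insert d (insert e (C - {c})))"
  proof -
    have "insert c (insert d (insert e (C - {c}))) = insert d (insert e C)" using c by auto
    then show ?thesis using rCde rCpde by simp
  qed
  have rB: "r (insert c B) = r B" using cl_trans[OF Bsub BE basic(5) rS] .
  have icB: "insert c B = insert d ((E - C - D - {x}) \<union> C)" unfolding B_def using c by auto
  have sm: "r (E - (D - {d})) + r ((E - C - D - {x}) \<union> C) \<le> r (insert d ((E - C - D - {x}) \<union> C)) + r (E - D)"
    using basic d CE CD by (intro rs') auto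
  have s1: "{c, x} \<subseteq> E - (C - {c}) - (D - {d})" using x Gp by auto
  have e1: "{c, x} \<union> (C - {c}) = insert x C" using c by auto
  have e2: "(E - (C - {c}) - (D - {d}) - {c, x}) \<union> (C - {c}) = B" unfolding B_def Gp using basic x c d by auto
  have lp: "ml E r (C - {c}) (D - {d}) {c, x} = int (r (insert x C)) + int (r B) - int (card C - 1) - int (r (E - D))"
    using mlp_def2[OF s1] e1 e2 by simp
  have n0: "1 \<le> ml E r C D {x}"
  proof -
    have "1 \<le> card (E - C - D - {x})" using E04 x fin by (simp add: card_Diff_singleton)
    then show ?thesis using N0ch[of "{x}"] x by auto
  qed
  have l0: "ml E r C D {x} = int (r (insert x C)) + int (r ((E - C - D - {x}) \<union> C)) - int (card C) - int (r (E - D))"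
    unfolding ml_def using rC by simp
  have rB2: "r (insert d ((E - C - D - {x}) \<union> C)) = r B" using rB icB by simp
  have ic: "int (card C - 1) = int (card C) - 1" using cC1 by simp
  show False using lp l0 n0 l sm rB2 rED1 ic by linarith
qed

lemma td: "x \<in> E - C - D \<Longrightarrow> x \<noteq> e \<Longrightarrow> ml E r (C - {c}) (D - {d}) {d, x} \<le> 1 \<Longrightarrow> False"
proof -
  assume x: "x \<in> E - C - D" "x \<noteq> e" and l: "ml E r (C - {c}) (D - {d}) {d, x} \<le> 1"
  have s1: "{d, x} \<subseteq> E - (C - {c}) - (D - {d})" using x Gp by auto
  have e1: "{d, x} \<union> (C - {c}) = insert d (insert x (C - {c}))" by auto
  have e2: "(E - (C - {c}) - (D - {d}) - {d, x}) \<union> (C - {c}) = (E - C - D - {x}) \<union> C" using Gp basic x c d by auto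
  have lp: "ml E r (C - {c}) (D - {d}) {d, x} = int (r (insert d (insert x (C - {c})))) + int (r ((E - C - D - {x}) \<union> C)) - int (card C - 1) - int (r (E - D))"
    using mlp_def2[OF s1] e1 e2 by simp
  show False
  proof (cases "card C + 1 \<le> r (insert d (insert x (C - {c})))")
    case True
    have n0: "1 \<le> ml E r C D {x}"
    proof -
      have "1 \<le> card (E - C - D - {x})" using E04 x fin by (simp add: card_Diff_singleton)
      then show ?thesis using N0ch[of "{x}"] x by auto
    qed
    have l0: "ml E r C D {x} = int (r (insert x C)) + int (r ((E - C - D - {x}) \<union> C)) - int (card C) - int (r (E - D))"
      unfolding ml_def using rC by simp
    have "r (insert x C) \<le> r C + 1" using r_ins CE x by auto
    moreover have ic: "int (card C - 1) = int (card C) - 1" using cC1 by simp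
    ultimately show False using True lp l0 n0 l rC by linarith
  next
    case False
    have sm: "r (insert x (insert d (insert e C))) + r (insert d (C - {c})) \<le> r (insert d (insert e C)) + r (insert d (insert x (C - {c})))"
      using basic x c CE by (intro rs') auto
    have "r (insert x (insert e C)) \<le> r (insert x (insert d (insert e C)))"
      using basic x CE by (intro rm) auto
    then have rxe: "r (insert x (insert e C)) \<le> card C + 1" using sm False rCde rCpd by linarith
    have sxe: "{x, e} \<subseteq> E - C - D" using x e by auto
    have c2: "2 \<le> card {x, e}" using x by simp
    have "card (E - C - D - {x, e}) = card (E - C - D) - 2"
      using sxe x fin by (simp add: card_Diff_subset)
    then have c2': "2 \<le> card (E - C - D - {x, e})" using E04 by linarith
    have n0: "2 \<le> ml E r C D {x, e}" using N0ch[OF sxe] c2 c2' by blast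
    have "r ((E - C - D - {x, e}) \<union> C) \<le> r (E - D)" using CE CD by (intro rm) auto
    moreover have "{x, e} \<union> C = insert x (insert e C)" by auto
    ultimately show False using n0 rxe rC unfolding ml_def by simp
  qed
qed

lemma one_side: "(t = c \<and> s = d) \<or> (t = d \<and> s = c) \<Longrightarrow> A \<subseteq> E - (C - {c}) - (D - {d}) \<Longrightarrow>
  t \<in> A \<Longrightarrow> s \<notin> A \<Longrightarrow> (k::nat) = 1 \<or> k = 2 \<Longrightarrow> k \<le> card A \<Longrightarrow>
  ml E r (C - {c}) (D - {d}) A < int k \<Longrightarrow> card (A \<inter> (E - C - D)) < k \<Longrightarrow> False"
proof -
  assume ts: "(t = c \<and> s = d) \<or> (t = d \<and> s = c)" and A: "A \<subseteq> E - (C - {c}) - (D - {d})"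
    "t \<in> A" "s \<notin> A" and k: "k = 1 \<or> k = 2" "k \<le> card A" "ml E r (C - {c}) (D - {d}) A < int k"
    "card (A \<inter> (E - C - D)) < k"
  have AG: "A \<subseteq> insert c (insert d (E - C - D))" using A(1) Gp by simp
  have Adec: "A = insert t (A \<inter> (E - C - D))" using AG A(2,3) ts by blast
  have fA: "finite (A \<inter> (E - C - D))" using fin by auto
  have l1: "ml E r (C - {c}) (D - {d}) A \<le> 1" using k by auto
  have "card (A \<inter> (E - C - D)) \<le> 1" using k by auto
  then have Z: "A \<inter> (E - C - D) = {} \<or> (\<exists>x. A \<inter> (E - C - D) = {x})"
  proof (cases "A \<inter> (E - C - D) = {}")
    case False
    then have "card (A \<inter> (E - C - D)) \<noteq> 0" using fA by simp
    then have "card (A \<inter> (E - C - D)) = 1" using \<open>card (A \<inter> (E - C - D)) \<le> 1\<close> by linarith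
    then show ?thesis by (meson card_1_singletonE)
  qed simp
  show False
  proof (cases "e \<in> A")
    case True
    have eA: "e \<in> A \<inter> (E - C - D)" using True e by auto
    have Ae: "A \<inter> (E - C - D) = {e}"
    proof (cases "A \<inter> (E - C - D) = {}")
      case True then show ?thesis using eA by auto
    next
      case False
      then obtain x where "A \<inter> (E - C - D) = {x}" using Z by blast
      then show ?thesis using eA by auto
    qed
    have Ate: "A = {t, e}" using Adec[unfolded Ae] .
    have "ml E r (C - {c}) (D - {d}) {c, d, e} \<le> ml E r (C - {c}) (D - {d}) {t, e}" using move[of t] ts by blast
    then have h1: "ml E r (C - {c}) (D - {d}) {c, d, e} \<le> 1" using Ate l1 by simp
    have h2: "{c, d, e} \<subseteq> E - (C - {c}) - (D - {d})" unfolding Gp using e by auto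
    have h3: "card ({c, d, e} \<inter> (E - C - D)) \<le> 1"
    proof -
      have "{c, d, e} \<inter> (E - C - D) = {e}" using basic e c d by auto
      then show ?thesis by simp
    qed
    show False by (rule caseA[OF h2 _ _ h3 h1]) auto
  next
    case False
    show False
    proof (cases "A \<inter> (E - C - D) = {}")
      case True
      have "A = {t}" using Adec[unfolded True] .
      moreover have "ml E r (C - {c}) (D - {d}) {t} = 1" using single[of t] ts by blast
      ultimately show False using k by auto
    next
      case False
      then obtain x where x: "A \<inter> (E - C - D) = {x}" using Z by auto
      have xe: "x \<in> E - C - D" "x \<noteq> e" using x \<open>e \<notin> A\<close> by auto
      have "A = {t, x}" using Adec[unfolded x] .
      then have l2: "ml E r (C - {c}) (D - {d}) {t, x} \<le> 1" using l1 by simp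
      from ts show False
      proof
        assume "t = c \<and> s = d" then show False using tc[OF xe] l2 by simp
      next
        assume "t = d \<and> s = c" then show False using td[OF xe] l2 by simp
      qed
    qed
  qed
qed

lemma core: "A \<subseteq> E - (C - {c}) - (D - {d}) \<Longrightarrow> (k::nat) = 1 \<or> k = 2 \<Longrightarrow> k \<le> card A \<Longrightarrow>
  ml E r (C - {c}) (D - {d}) A < int k \<Longrightarrow> card (A \<inter> (E - C - D)) < k \<Longrightarrow> False"
proof -
  assume A: "A \<subseteq> E - (C - {c}) - (D - {d})" and k: "k = 1 \<or> k = 2" "k \<le> card A"
    "ml E r (C - {c}) (D - {d}) A < int k" "card (A \<inter> (E - C - D)) < k"
  consider "c \<in> A \<and> d \<in> A" | "c \<notin> A \<and> d \<notin> A" | "c \<in> A \<and> d \<notin> A" | "d \<in> A \<and> c \<notin> A" by blast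
  then show False
  proof cases
    case 1
    have "card (A \<inter> (E - C - D)) \<le> 1" "ml E r (C - {c}) (D - {d}) A \<le> 1" using k by auto
    then show False using caseA A 1 by blast
  next
    case 2
    then have "A \<inter> (E - C - D) = A" using A Gp by auto
    then show False using k by auto
  next
    case 3
    then show False using one_side[of c d A k] A k by auto
  next
    case 4
    then show False using one_side[of d c A k] A k by auto
  qed
qed

lemma chainX: "X \<subseteq> E - (C - {c}) - (D - {d}) \<Longrightarrow> ml E r C D (X \<inter> (E - C - D)) \<le> ml E r (C - {c}) (D - {d}) X"
proof -
  assume X: "X \<subseteq> E - (C - {c}) - (D - {d})"
  have cG: "c \<in> E - (C - {c}) - (D - {d})" using Gp by auto
  have h1: "ml E r (insert c (C - {c})) (D - {d}) (X - {c}) \<le> ml E r (C - {c}) (D - {d}) X"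
    using con_le[OF Cp cG X] .
  have icC: "insert c (C - {c}) = C" using c by auto
  have D1: "D - {d} \<subseteq> E" "C \<inter> (D - {d}) = {}" using DE CD by auto
  have dG: "d \<in> E - C - (D - {d})" using basic d by auto
  have XG: "X - {c} \<subseteq> E - C - (D - {d})" using X c by auto
  have h2: "ml E r C (insert d (D - {d})) (X - {c} - {d}) \<le> ml E r C (D - {d}) (X - {c})"
    using del_le[OF CE D1 dG XG] .
  have idD: "insert d (D - {d}) = D" using d by auto
  have XX: "X \<subseteq> insert c (insert d (E - C - D))" using X Gp by simp
  have "X - {c} - {d} = X \<inter> (E - C - D)" using XX basic c d by auto
  then show ?thesis using h1 h2 icC idD by simp
qed

lemma Np_conn: "three_connected (E - (C - {c}) - (D - {d})) (contr_rank r (C - {c}))"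
proof -
  let ?G = "E - (C - {c}) - (D - {d})"
  have main: "\<And>X (k::nat). X \<subseteq> ?G \<Longrightarrow> k = 1 \<or> k = 2 \<Longrightarrow> k \<le> card X \<Longrightarrow> k \<le> card (?G - X) \<Longrightarrow>
     int k \<le> ml E r (C - {c}) (D - {d}) X"
  proof (rule ccontr)
    fix X and k :: nat
    assume X: "X \<subseteq> ?G" and k: "k = 1 \<or> k = 2" "k \<le> card X" "k \<le> card (?G - X)"
      and nl: "\<not> int k \<le> ml E r (C - {c}) (D - {d}) X"
    have lt: "ml E r (C - {c}) (D - {d}) X < int k" using nl by simp
    have c0: "ml E r C D (X \<inter> (E - C - D)) < int k" using chainX[OF X] lt by simp
    have XE0: "X \<inter> (E - C - D) \<subseteq> E - C - D" by auto
    have cc: "card (X \<inter> (E - C - D)) < k \<or> card (E - C - D - X \<inter> (E - C - D)) < k"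
    proof (rule ccontr)
      assume "\<not> ?thesis"
      then have "k \<le> card (X \<inter> (E - C - D))" "k \<le> card (E - C - D - X \<inter> (E - C - D))" by auto
      then show False using N0ch[OF XE0] k c0 by auto
    qed
    then show False
    proof
      assume "card (X \<inter> (E - C - D)) < k"
      then show False using core[OF X k(1) k(2) lt] by blast
    next
      assume a: "card (E - C - D - X \<inter> (E - C - D)) < k"
      have GX: "?G - X \<subseteq> ?G" by auto
      have "E - C - D - X \<inter> (E - C - D) = (?G - X) \<inter> (E - C - D)" using Gp by auto
      then have a': "card ((?G - X) \<inter> (E - C - D)) < k" using a by simp
      have "ml E r (C - {c}) (D - {d}) (?G - X) = ml E r (C - {c}) (D - {d}) X" using ml_sym Cp X by blast
      then have lt': "ml E r (C - {c}) (D - {d}) (?G - X) < int k" using lt by simp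
      show False using core[OF GX k(1) k(3) lt' a'] by blast
    qed
  qed
  show ?thesis
    unfolding three_conn_char[OF Cp]
  proof (intro allI impI conjI)
    fix X assume X: "X \<subseteq> ?G"
    show "1 \<le> card X \<and> 1 \<le> card (?G - X) \<Longrightarrow> 1 \<le> ml E r (C - {c}) (D - {d}) X"
      using main[OF X, of 1] by auto
    show "2 \<le> card X \<and> 2 \<le> card (?G - X) \<Longrightarrow> 2 \<le> ml E r (C - {c}) (D - {d}) X"
      using main[OF X, of 2] by auto
  qed
qed

end


theorem lemma4p2:
  fixes E :: "'a set" and r :: "'a set \<Rightarrow> nat" and T :: "'a set set"
    and \<theta> :: nat and C D :: "'a set"
  assumes "three_connected E r"
    and "is_tangle E r T \<theta>"
    and "C \<subseteq> E" and "D \<subseteq> E" and "C \<inter> D = {}"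
    and "tangle_indep E r T \<theta> (C \<union> D)"
    and "three_connected (E - C - D) (contr_rank r C)"
  shows "\<forall>d\<in>D. three_connected (E - C - (D - {d})) (contr_rank r C)
           \<or> (\<exists>c\<in>C. three_connected (E - (C - {c}) - (D - {d})) (contr_rank r (C - {c})))"
proof
  fix d assume d: "d \<in> D"
  have mat: "matroid E r" using assms(1) unfolding n_connected_def by blast
  have SS: "S E r T \<theta> C D" unfolding S_def S_axioms_def M3_def using assms mat by blast
  interpret S E r T \<theta> C D by (rule SS)
  show "three_connected (E - C - (D - {d})) (contr_rank r C)
           \<or> (\<exists>c\<in>C. three_connected (E - (C - {c}) - (D - {d})) (contr_rank r (C - {c})))"
  proof (cases "three_connected (E - C - (D - {d})) (contr_rank r C)")
    case True then show ?thesis by blast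
  next
    case False
    obtain e where e: "e \<in> E - C - D" "r (insert d (insert e C)) = card C + 1" "r (insert e C) = card C + 1"
      "3 \<le> card (E - C - D)" "r (E - (D - {d})) = r (E - D)"
      using N_fail[OF d False] by blast
    obtain c where c: "c \<in> C" "r (insert d (insert e (C - {c}))) = card C + 1"
      using K_lem[OF d e(1) e(4) e(2)] by blast
    have fC: "finite C" "finite D" using assms(3,4) fin finite_subset by blast+
    have cC: "card C \<ge> 1" "card D \<ge> 1" using c d fC by (metis One_nat_def Suc_leI card_gt_0_iff empty_iff)+
    show ?thesis
    proof (cases "card (C \<union> D) \<ge> 3")
      case False
      then have "card C + card D \<le> 2" using cardW by simp
      then have "card C = 1" "card D = 1" using cC by auto
      then have "C = {c}" "D = {d}" using c d by (metis card_1_singletonE singletonD)+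
      then have eqs: "E - (C - {c}) - (D - {d}) = E" "contr_rank r (C - {c}) = r" using contr_empty by auto
      have "three_connected (E - (C - {c}) - (D - {d})) (contr_rank r (C - {c}))"
        unfolding eqs by (rule assms(1))
      then show ?thesis using c by blast
    next
      case True
      have E04: "4 \<le> card (E - C - D)"
      proof (rule ccontr)
        assume "\<not> 4 \<le> card (E - C - D)"
        then have c3: "card (E - C - D) = 3" using e(4) by auto
        let ?Y = "insert e (C \<union> D)"
        have YE: "?Y \<subseteq> E" using e WE by auto
        have "conn_fn E r ?Y + r E = r ?Y + r (E - ?Y)" using conn_eq YE by blast
        moreover have "r ?Y \<le> r E" using rm YE by blast
        moreover have "r (E - ?Y) \<le> card (E - ?Y)" using rc by auto
        moreover have "card (E - ?Y) = 2"
        proof -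
          have "E - ?Y = E - C - D - {e}" by auto
          then show ?thesis using c3 e(1) fin by (simp add: card_Diff_singleton)
        qed
        ultimately have "conn_fn E r ?Y < card (C \<union> D)" using True by linarith
        moreover have "card (?Y - (C \<union> D)) \<le> 1"
        proof -
          have "?Y - (C \<union> D) \<subseteq> {e}" by auto
          then show ?thesis by (metis card.empty card_insert_disjoint card_mono empty_iff finite.emptyI finite.insertI le_numeral_extra(4) subset_singletonD One_nat_def card_1_singletonE)
        qed
        ultimately show False using G_lem[OF True _ YE] by blast
      qed
      have "S2 E r T \<theta> C D c d e" unfolding S2_def S2_axioms_def
        using SS d e c True E04 by blast
      then have "three_connected (E - (C - {c}) - (D - {d})) (contr_rank r (C - {c}))"
        by (rule S2.Np_conn)
      then show ?thesis using c by blast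
    qed
  qed
qed

end
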